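(* Let $a\in(0,2)$, $\gamma\in(0,a)$ and $p\in\big(\frac{2}{2-\gamma},\frac{2}{2-a}\big)$. There exists a constant $C_{\gamma,p,a}>0$ such that for any $F^2\in\mathcal P_{\rm sym}(\mathbb R^2\times\mathbb R^2)$, $$\int_{\mathbb R^2\times\mathbb R^2}|x_1-x_2|^{-\gamma}F^2(dx_1,dx_2)\le C_{\gamma,p,a}\Big(1+\mathcal I^2_a(F^2)^{1-\frac2a\left(\frac1p-\frac{2-a}{2}\right)}\Big).$$
   Context: $\mathcal P_{\rm sym}(\mathbb R^2\times\mathbb R^2)$: probability measures invariant under swapping the two $\mathbb R^2$ components. With $\Phi(x,y)=(x-y)(\ln x-\ln y)$, for $G$ a density on $\mathbb R^{2N}$ and $X^x_k=(x_1,\dots,x_{k-1},x,x_{k+1},\dots,x_N)$, $\mathcal I^N_a(G)=\frac{1}{2N}\sum_{k=1}^N\int_{\mathbb R^{2(N-1)}}\int_{\mathbb R^2\times\mathbb R^2}\frac{\Phi(G(X_k^x),G(X_k^y))}{|x-y|^{2+a}}dxdy\prod_{j\ne k}dx_j$ (used here with $N=2$). *)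

theory Defs
  imports "HOL-Probability.Probability"
begin

text \<open>Points of R^2 are modelled as real \<times> real (Euclidean norm).
  Phi(u,v) = (u - v)(ln u - ln v), extended to [0,\<infinity>] by its natural limits:
  Phi(u,u) = 0, Phi = \<infinity> if exactly one argument is 0 (or \<infinity>).\<close>
definition Phi :: "ennreal \<Rightarrow> ennreal \<Rightarrow> ennreal" where
  "Phi u v = (if u = v then 0
      else if u = 0 \<or> v = 0 \<or> u = \<infinity> \<or> v = \<infinity> then \<infinity>
      else ennreal ((enn2real u - enn2real v) * (ln (enn2real u) - ln (enn2real v))))"

text \<open>The functional I^N_a for N = 2, applied to a density G on R^2 \<times> R^2:
  (1/(2N)) * sum over k = 1,2 of the triple integral.\<close>
definition Ia2_density :: "real \<Rightarrow> ((real \<times> real) \<times> (real \<times> real) \<Rightarrow> ennreal) \<Rightarrow> ennreal" where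
  "Ia2_density a G = ennreal (1 / 4) *
     ((\<integral>\<^sup>+ x2. \<integral>\<^sup>+ x. \<integral>\<^sup>+ y.
         Phi (G (x, x2)) (G (y, x2)) * ennreal (1 / norm (x - y) powr (2 + a)) \<partial>lborel \<partial>lborel \<partial>lborel)
    + (\<integral>\<^sup>+ x1. \<integral>\<^sup>+ x. \<integral>\<^sup>+ y.
         Phi (G (x1, x)) (G (x1, y)) * ennreal (1 / norm (x - y) powr (2 + a)) \<partial>lborel \<partial>lborel \<partial>lborel))"

definition Ia2 :: "real \<Rightarrow> ((real \<times> real) \<times> (real \<times> real)) measure \<Rightarrow> ennreal" where
  "Ia2 a F = (if absolutely_continuous lborel F then Ia2_density a (RN_deriv lborel F) else \<infinity>)"

definition Psym :: "((real \<times> real) \<times> (real \<times> real)) measure \<Rightarrow> bool" where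
  "Psym F \<longleftrightarrow> prob_space F \<and> sets F = sets borel \<and>
     distr F borel (\<lambda>(x, y). (y, x)) = F"

end

theory Submission
  imports Defs
begin

lemma Phi_meas[measurable]: "(\<lambda>(u,v). Phi u v) \<in> borel_measurable (borel \<Otimes>\<^sub>M borel)"
  unfolding Phi_def by measurable

lemma Phi_meas2[measurable]:
  assumes [measurable]: "f \<in> borel_measurable M" "g \<in> borel_measurable M"
  shows "(\<lambda>x. Phi (f x) (g x)) \<in> borel_measurable M"
  using measurable_compose[OF measurable_Pair[OF assms] Phi_meas] by simp

lemma ln3: "1 \<le> ln (3::real)"
proof -
  have "exp 1 \<le> (3::real)" using exp_le by simp
  then have "ln (exp 1) \<le> ln (3::real)" by (subst ln_le_cancel_iff) auto
  then show ?thesis by simp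
qed

lemma le3: "(v::ennreal) \<le> 3 * v"
proof -
  have "1 * v \<le> 3 * v" by (rule mult_right_mono) auto
  then show ?thesis by simp
qed

lemma Phi_ineq: "u \<le> Phi u v + 3 * v"
proof (cases "u = v \<or> u = 0 \<or> v = 0 \<or> u = \<infinity> \<or> v = \<infinity>")
  case True
  then show ?thesis unfolding Phi_def
    by (auto simp: ennreal_mult_top le3 add_increasing2)
next
  case False
  obtain x where x: "u = ennreal x" "0 \<le> x" using False by (cases u) auto
  obtain y where y: "v = ennreal y" "0 \<le> y" using False by (cases v) auto
  have xy: "0 < x" "0 < y" "x \<noteq> y" using x y False by auto
  have P: "Phi u v = ennreal ((x - y) * (ln x - ln y))"
    using x y xy False unfolding Phi_def by simp
  show ?thesis
  proof (cases "x \<le> 3 * y")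
    case True
    have e3: "ennreal (3 * y) = 3 * ennreal y" using y by (simp add: ennreal_mult)
    have "ennreal x \<le> ennreal (3 * y)" using True by (rule ennreal_leI)
    then have "u \<le> 3 * v" using x y e3 by simp
    then show ?thesis by (meson add_increasing zero_le order_trans)
  next
    case False
    then have "3 < x / y" using xy by (simp add: field_simps)
    then have "ln 3 < ln (x/y)" using xy by simp
    then have l: "1 < ln x - ln y" using ln3 xy by (simp add: ln_div)
    have xy3: "0 \<le> x - 3 * y" using False by simp
    have "x - 3*y \<le> (x - 3*y) * (ln x - ln y)" using l xy3
      by (simp add: mult_le_cancel_left1)
    also have "\<dots> \<le> (x - y) * (ln x - ln y)" using l xy xy3
      by (intro mult_right_mono) auto
    finally have "x \<le> (x - y) * (ln x - ln y) + 3 * y" by simp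
    then have "ennreal x \<le> ennreal ((x - y) * (ln x - ln y) + 3 * y)" by (rule ennreal_leI)
    also have "\<dots> = ennreal ((x - y) * (ln x - ln y)) + 3 * ennreal y"
      using xy l xy3 by (simp add: ennreal_plus ennreal_mult)
    finally show ?thesis using P x y by simp
  qed
qed

definition Ker :: "real \<Rightarrow> real \<times> real \<Rightarrow> real \<times> real \<Rightarrow> ennreal" where
  "Ker a x y = ennreal (1 / norm (x - y) powr (2 + a))"

lemma Ker_meas[measurable]: "(\<lambda>(x, y). Ker a x y) \<in> borel_measurable (lborel \<Otimes>\<^sub>M lborel)"
  unfolding Ker_def by measurable

lemma h_meas[measurable]:
  assumes [measurable]: "f \<in> borel_measurable lborel"
  shows "(\<lambda>(x, y). Phi (f x) (f y) * Ker a x y) \<in> borel_measurable (lborel \<Otimes>\<^sub>M lborel)"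
proof -
  have [measurable]: "(\<lambda>z. Ker a (fst z) (snd z)) \<in> borel_measurable (lborel \<Otimes>\<^sub>M lborel)"
    using Ker_meas[of a] by (simp add: case_prod_beta')
  show ?thesis unfolding case_prod_beta' by measurable
qed

lemma pair_ineq:
  fixes f :: "real \<times> real \<Rightarrow> ennreal" and A B :: "(real \<times> real) set"
  assumes f[measurable]: "f \<in> borel_measurable lborel"
    and AB[measurable]: "A \<in> sets lborel" "B \<in> sets lborel"
    and D: "0 < D" "\<And>x y. x \<in> A \<Longrightarrow> y \<in> B \<Longrightarrow> 0 < norm (x - y) \<and> norm (x - y) \<le> D"
    and a: "0 < a"
  shows "emeasure lborel B * (\<integral>\<^sup>+x. f x * indicator A x \<partial>lborel)
    \<le> ennreal (D powr (2 + a)) * (\<integral>\<^sup>+x. \<integral>\<^sup>+y. Phi (f x) (f y) * Ker a x y \<partial>lborel \<partial>lborel)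
      + 3 * emeasure lborel A * (\<integral>\<^sup>+y. f y * indicator B y \<partial>lborel)"
proof -
  define Dp where "Dp = ennreal (D powr (2 + a))"
  define SB where "SB = (\<integral>\<^sup>+y. f y * indicator B y \<partial>lborel)"
  define H where "H x = (\<integral>\<^sup>+y. Phi (f x) (f y) * Ker a x y * indicator B y \<partial>lborel)" for x
  have hm: "(\<lambda>(x, y). Phi (f x) (f y) * Ker a x y) \<in> borel_measurable (lborel \<Otimes>\<^sub>M lborel)"
    using h_meas[OF f] .
  have hm2[measurable]: "(\<lambda>z. Phi (f (fst z)) (f (snd z)) * Ker a (fst z) (snd z)) \<in> borel_measurable (lborel \<Otimes>\<^sub>M lborel)"
    using hm by (simp add: case_prod_beta')
  have Hm[measurable]: "H \<in> borel_measurable lborel"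
    unfolding H_def by measurable
  have pt: "f x \<le> Dp * (Phi (f x) (f y) * Ker a x y) + 3 * f y" if "x \<in> A" "y \<in> B" for x y
  proof -
    from D(2)[OF that] have n: "0 < norm (x - y)" "norm (x - y) \<le> D" by auto
    have "1 \<le> D powr (2 + a) / norm (x - y) powr (2 + a)"
      using n a by (simp add: powr_mono2)
    then have "1 \<le> Dp * Ker a x y"
      unfolding Dp_def Ker_def using n D(1)
      by (simp add: ennreal_mult[symmetric] ennreal_1[symmetric] del: ennreal_1)
    then have "Phi (f x) (f y) * 1 \<le> Phi (f x) (f y) * (Dp * Ker a x y)"
      by (rule mult_left_mono) auto
    then have "Phi (f x) (f y) \<le> Dp * (Phi (f x) (f y) * Ker a x y)"
      by (simp add: mult_ac)
    then show ?thesis using Phi_ineq[of "f x" "f y"]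
      by (meson add_right_mono order_trans)
  qed
  have step2: "f x * emeasure lborel B \<le> Dp * H x + 3 * SB" if "x \<in> A" for x
  proof -
    have "f x * emeasure lborel B = (\<integral>\<^sup>+y. f x * indicator B y \<partial>lborel)"
      using nn_integral_cmult_indicator[OF AB(2), of "f x"] by simp
    also have "\<dots> \<le> (\<integral>\<^sup>+y. (Dp * (Phi (f x) (f y) * Ker a x y * indicator B y) + 3 * (f y * indicator B y)) \<partial>lborel)"
      apply (rule nn_integral_mono)
      using pt[OF that] by (auto simp: indicator_def distrib_left)
    also have "\<dots> = Dp * H x + 3 * SB"
      unfolding H_def SB_def
      by (subst nn_integral_add) (auto simp: nn_integral_cmult)
    finally show ?thesis .
  qed
  have "emeasure lborel B * (\<integral>\<^sup>+x. f x * indicator A x \<partial>lborel)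
      = (\<integral>\<^sup>+x. (f x * emeasure lborel B) * indicator A x \<partial>lborel)"
    by (subst nn_integral_cmult[symmetric]) (auto simp: mult_ac)
  also have "\<dots> \<le> (\<integral>\<^sup>+x. Dp * (H x * indicator A x) + (3 * SB) * indicator A x \<partial>lborel)"
    apply (rule nn_integral_mono)
    using step2 by (auto simp: indicator_def)
  also have "\<dots> = Dp * (\<integral>\<^sup>+x. H x * indicator A x \<partial>lborel) + 3 * SB * emeasure lborel A"
    by (subst nn_integral_add) (auto simp: nn_integral_cmult nn_integral_indicator[OF AB(1)])
  finally have c1: "emeasure lborel B * (\<integral>\<^sup>+x. f x * indicator A x \<partial>lborel) \<le> Dp * (\<integral>\<^sup>+x. H x * indicator A x \<partial>lborel) + 3 * SB * emeasure lborel A" .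
  have c2: "(\<integral>\<^sup>+x. H x * indicator A x \<partial>lborel) \<le> (\<integral>\<^sup>+x. \<integral>\<^sup>+y. Phi (f x) (f y) * Ker a x y \<partial>lborel \<partial>lborel)"
    unfolding H_def
  proof (rule nn_integral_mono)
    fix x
    have "(\<integral>\<^sup>+y. Phi (f x) (f y) * Ker a x y * indicator B y \<partial>lborel) \<le> (\<integral>\<^sup>+y. Phi (f x) (f y) * Ker a x y \<partial>lborel)"
      by (rule nn_integral_mono) (auto simp: indicator_def)
    then show "(\<integral>\<^sup>+y. Phi (f x) (f y) * Ker a x y * indicator B y \<partial>lborel) * indicator A x \<le> (\<integral>\<^sup>+y. Phi (f x) (f y) * Ker a x y \<partial>lborel)"
      by (auto simp: indicator_def)
  qed
  have "Dp * (\<integral>\<^sup>+x. H x * indicator A x \<partial>lborel) \<le> Dp * (\<integral>\<^sup>+x. \<integral>\<^sup>+y. Phi (f x) (f y) * Ker a x y \<partial>lborel \<partial>lborel)"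
    using c2 by (rule mult_left_mono) simp
  with c1 have "emeasure lborel B * (\<integral>\<^sup>+x. f x * indicator A x \<partial>lborel) \<le> Dp * (\<integral>\<^sup>+x. \<integral>\<^sup>+y. Phi (f x) (f y) * Ker a x y \<partial>lborel \<partial>lborel) + 3 * SB * emeasure lborel A"
    by (meson add_right_mono order_trans)
  then show ?thesis unfolding Dp_def SB_def
    by (simp add: mult_ac)
qed

lemma ann_eq: "{x::real\<times>real. s \<le> norm (x - z) \<and> norm (x - z) < t} = ball z t - ball z s"
  by (auto simp: dist_norm norm_minus_commute)

lemma ann_meas: 
  assumes "0 \<le> s" "s \<le> t"
  shows "emeasure lborel {x::real\<times>real. s \<le> norm (x - z) \<and> norm (x - z) < t} = ennreal (pi * (t^2 - s^2))"
proof -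
  have sub: "ball z s \<subseteq> ball z t" using assms by auto
  have "emeasure lborel (ball z t - ball z s) = emeasure lborel (ball z t) - emeasure lborel (ball z s)"
    by (rule emeasure_Diff) (use sub emeasure_lborel_ball_finite[of z s] in auto)
  also have "\<dots> = ennreal (pi * t^2) - ennreal (pi * s^2)"
    using emeasure_ball[of s z] emeasure_ball[of t z] assms by (simp add: unit_ball_vol_2 DIM_prod power2_eq_square)
  also have "\<dots> = ennreal (pi * (t^2 - s^2))"
    using assms by (subst ennreal_minus) (auto simp: algebra_simps)
  finally show ?thesis by (simp add: ann_eq)
qed

lemma powr_pow_swap: "0 < (\<rho>::real) \<Longrightarrow> (\<rho> ^ n) powr s = (\<rho> powr s) ^ n"
  by (simp add: powr_realpow[symmetric] powr_powr mult.commute)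

lemma core:
  fixes a \<gamma> :: real
  assumes a: "0 < a" "a < 2" and g: "0 < \<gamma>" "\<gamma> < a"
  shows "\<exists>C1 C2. 0 \<le> C1 \<and> 0 \<le> C2 \<and> (\<forall>f z r. f \<in> borel_measurable lborel \<longrightarrow> 0 < r \<longrightarrow>
     (\<integral>\<^sup>+x. ennreal (norm (x - z) powr (-\<gamma>)) * f x \<partial>lborel)
       \<le> ennreal (C1 * r powr (-\<gamma>)) * (\<integral>\<^sup>+x. f x \<partial>lborel)
         + ennreal (C2 * r powr (a - \<gamma>)) * (\<integral>\<^sup>+x. \<integral>\<^sup>+y. Phi (f x) (f y) * Ker a x y \<partial>lborel \<partial>lborel))"
proof -
  define \<rho> where "\<rho> = (6::real) powr (1 / (2 - \<gamma>))"
  have e: "0 < 1 / (2 - \<gamma>)" using a g by simp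
  have \<rho>1: "1 < \<rho>"
    unfolding \<rho>_def using powr_less_mono[OF e, of 6] by simp
  have \<rho>0: "0 < \<rho>" using \<rho>1 by simp
  have \<rho>6: "\<rho> powr (2 - \<gamma>) = 6"
    unfolding \<rho>_def using a g by (simp add: powr_powr)
  define V where "V = pi * (\<rho>^2 - 1)"
  have V0: "0 < V" unfolding V_def using \<rho>1 by (simp add: one_less_power)
  define K where "K = \<rho> powr \<gamma> * (2 * \<rho>) powr (2 + a) / V"
  have K0: "0 \<le> K" unfolding K_def using V0 by simp
  define \<beta> where "\<beta> = \<rho> powr (\<gamma> - a)"
  have \<beta>0: "0 < \<beta>" unfolding \<beta>_def using \<rho>0 by simp
  have \<beta>1: "\<beta> < 1" unfolding \<beta>_def using \<rho>1 g
    using powr_less_cancel_iff[OF \<rho>1, of "\<gamma> - a" 0] by simp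
  define lam where "lam = max \<beta> (3/4)"
  have l0: "0 < lam" "lam < 1" "\<beta> \<le> lam" "3/4 \<le> lam" using \<beta>0 \<beta>1 unfolding lam_def by auto
  define L where "L = 1 / (1 - lam)"
  have L0: "0 \<le> L" unfolding L_def using l0 by simp
  define C1 where "C1 = 1 + L"
  define C2 where "C2 = L * (4 * K)"
  show ?thesis
  proof (intro exI conjI allI impI)
    show "0 \<le> C1" "0 \<le> C2" unfolding C1_def C2_def using L0 K0 by auto
    fix f :: "real \<times> real \<Rightarrow> ennreal" and z :: "real \<times> real" and r :: real
    assume f[measurable]: "f \<in> borel_measurable lborel" and r: "0 < r"
    define J where "J = (\<integral>\<^sup>+x. \<integral>\<^sup>+y. Phi (f x) (f y) * Ker a x y \<partial>lborel \<partial>lborel)"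
    define m where "m = (\<integral>\<^sup>+x. f x \<partial>lborel)"
    define u where "u n = r / \<rho> ^ n" for n
    define A where "A n = {x. u n \<le> norm (x - z) \<and> norm (x - z) < u n * \<rho>}" for n
    define S where "S n = (\<integral>\<^sup>+x. f x * indicator (A n) x \<partial>lborel)" for n
    define t where "t n = ennreal (u n powr (-\<gamma>)) * S n" for n
    define r' where "r' = r powr (a - \<gamma>)"
    have r'0: "0 \<le> r'" unfolding r'_def by simp
    have u0: "0 < u n" for n unfolding u_def using r \<rho>0 by simp
    have uSuc: "u (Suc n) = u n / \<rho>" for n unfolding u_def by simp
    have A_meas[measurable]: "A n \<in> sets lborel" for n
      unfolding A_def ann_eq by simp
    have A_em: "emeasure lborel (A n) = ennreal (V * (u n)^2)" for n
    proof -
      have "emeasure lborel (A n) = ennreal (pi * ((u n * \<rho>)^2 - (u n)^2))"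
        unfolding A_def using u0[of n] \<rho>1 by (intro ann_meas) auto
      also have "pi * ((u n * \<rho>)^2 - (u n)^2) = V * (u n)^2"
        unfolding V_def by (simp add: algebra_simps power_mult_distrib)
      finally show ?thesis .
    qed
    have rec: "t (Suc n) \<le> ennreal (K * r' * \<beta>^n) * J + ennreal (1/2) * t n" for n
    proof -
      define D where "D = 2 * \<rho> * u n"
      have Dp: "0 < D" unfolding D_def using \<rho>0 u0[of n] by simp
      have pd: "0 < norm (x - y) \<and> norm (x - y) \<le> D" if "x \<in> A (Suc n)" "y \<in> A n" for x y
      proof -
        have x: "norm (x - z) < u n" using that(1) uSuc[of n] \<rho>0 unfolding A_def by simp
        have y: "u n \<le> norm (y - z)" "norm (y - z) < u n * \<rho>" using that(2) unfolding A_def by auto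
        have e1: "x - y = (x - z) - (y - z)" by simp
        have "norm (y - z) - norm (x - z) \<le> norm (x - y)"
          unfolding e1 by (metis norm_minus_commute norm_triangle_ineq2)
        moreover have "norm (x - y) \<le> norm (x - z) + norm (y - z)"
          unfolding e1 by (rule norm_triangle_ineq4)
        ultimately have h1: "0 < norm (x - y)" "norm (x - y) \<le> u n + u n * \<rho>" using x y by linarith+
        have "u n \<le> u n * \<rho>" using \<rho>1 u0[of n] by simp
        then have "u n + u n * \<rho> \<le> D" unfolding D_def by (simp add: algebra_simps)
        then show ?thesis using h1 by linarith
      qed
      have P: "emeasure lborel (A n) * S (Suc n) \<le> ennreal (D powr (2 + a)) * J + 3 * emeasure lborel (A (Suc n)) * S n"
        using pair_ineq[OF f A_meas A_meas Dp pd a(1)] unfolding S_def J_def by blast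
      define c where "c = u (Suc n) powr (-\<gamma>) / (V * (u n)^2)"
      have c0: "0 \<le> c" unfolding c_def using V0 by simp
      have I1: "c * (V * (u n)^2) = u (Suc n) powr (-\<gamma>)"
        unfolding c_def using V0 u0[of n] by simp
      have us: "u (Suc n) powr (-\<gamma>) = \<rho> powr \<gamma> * u n powr (-\<gamma>)"
        unfolding uSuc using u0[of n] \<rho>0 by (simp add: powr_divide powr_minus field_simps)
      have I2: "c * D powr (2 + a) = K * r' * \<beta>^n"
      proof -
        have "c * D powr (2 + a) = \<rho> powr \<gamma> * u n powr (-\<gamma>) * ((2 * \<rho>) powr (2 + a) * u n powr (2 + a)) / (V * u n powr 2)"
          unfolding c_def D_def us using u0[of n] \<rho>0
          by (simp add: powr_mult powr_realpow)
        also have "\<dots> = K * (u n powr (-\<gamma>) * u n powr (2 + a) / u n powr 2)"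
          unfolding K_def using V0 by (simp add: field_simps)
        also have "u n powr (-\<gamma>) * u n powr (2 + a) / u n powr 2 = u n powr (a - \<gamma>)"
        proof -
          have "u n powr (-\<gamma>) * u n powr (2 + a) = u n powr (2 + (a - \<gamma>))"
            by (simp add: powr_add[symmetric] algebra_simps)
          also have "\<dots> = (u n)^2 * u n powr (a - \<gamma>)"
            using u0[of n] by (simp add: powr_add powr_realpow)
          finally show ?thesis using u0[of n] by (simp add: powr_realpow)
        qed
        also have "u n powr (a - \<gamma>) = r' * \<beta>^n"
        proof -
          have "u n powr (a - \<gamma>) = r powr (a - \<gamma>) / (\<rho> powr (a - \<gamma>))^n"
            unfolding u_def using r \<rho>0 by (simp add: powr_divide powr_pow_swap)
          moreover have "\<beta> = inverse (\<rho> powr (a - \<gamma>))"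
            unfolding \<beta>_def using powr_minus[of \<rho> "a - \<gamma>"] by simp
          ultimately show ?thesis unfolding r'_def by (simp add: divide_inverse power_inverse)
        qed
        finally show ?thesis by simp
      qed
      have I3: "3 * c * (V * (u (Suc n))^2) = 1/2 * u n powr (-\<gamma>)"
      proof -
        have "3 * c * (V * (u (Suc n))^2) = 3 * \<rho> powr \<gamma> * u n powr (-\<gamma>) / \<rho>^2"
        proof -
          have q: "(u (Suc n))^2 = (u n)^2 / \<rho>^2" by (simp add: uSuc power_divide)
          have "3 * c * (V * (u (Suc n))^2) = 3 * u (Suc n) powr (-\<gamma>) * ((u (Suc n))^2 / (u n)^2)"
            unfolding c_def using V0 u0[of n] by simp
          also have "(u (Suc n))^2 / (u n)^2 = 1 / \<rho>^2" unfolding q using u0[of n] by simp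
          finally have q2: "3 * c * (V * (u (Suc n))^2) = 3 * u (Suc n) powr (-\<gamma>) * (1 / \<rho>^2)" .
          have q3: "3 * u (Suc n) powr (-\<gamma>) * (1 / \<rho>^2) = 3 * \<rho> powr \<gamma> * u n powr (-\<gamma>) / \<rho>^2"
            unfolding us by simp
          show ?thesis using q2 q3 by (rule trans)
        qed
        also have "\<rho> powr \<gamma> / \<rho>^2 = 1 / 6"
        proof -
          have "\<rho> powr \<gamma> / \<rho>^2 = \<rho> powr \<gamma> / \<rho> powr 2" using \<rho>0 by (simp add: powr_realpow)
          also have "\<dots> = \<rho> powr (\<gamma> - 2)" by (simp add: powr_diff)
          also have "\<dots> = 1 / \<rho> powr (2 - \<gamma>)" by (simp add: powr_minus_divide[symmetric])
          finally show ?thesis using \<rho>6 by simp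
        qed
        then have "3 * \<rho> powr \<gamma> * u n powr (-\<gamma>) / \<rho>^2 = 1/2 * u n powr (-\<gamma>)"
          by (simp add: field_simps)
        finally show ?thesis .
      qed
      have e0: "ennreal c * (emeasure lborel (A n) * S (Suc n)) \<le> ennreal c * (ennreal (D powr (2 + a)) * J + 3 * emeasure lborel (A (Suc n)) * S n)"
        using P by (rule mult_left_mono) simp
      have e1: "ennreal c * (emeasure lborel (A n) * S (Suc n)) = t (Suc n)"
      proof -
        have "ennreal c * (emeasure lborel (A n) * S (Suc n)) = ennreal (c * (V * (u n)^2)) * S (Suc n)"
          unfolding A_em using c0 V0 by (simp add: ennreal_mult mult.assoc)
        then show ?thesis unfolding I1 t_def .
      qed
      have e2: "ennreal c * (ennreal (D powr (2 + a)) * J + 3 * emeasure lborel (A (Suc n)) * S n)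
          = ennreal (c * D powr (2 + a)) * J + ennreal (3 * c * (V * (u (Suc n))^2)) * S n"
        unfolding A_em using c0 V0
        by (simp add: distrib_left ennreal_mult mult_ac)
      have e3: "ennreal (c * D powr (2 + a)) * J + ennreal (3 * c * (V * (u (Suc n))^2)) * S n = ennreal (K * r' * \<beta>^n) * J + ennreal (1/2) * t n"
      proof -
        have h: "ennreal (1/2 * u n powr (-\<gamma>)) = ennreal (1/2) * ennreal (u n powr (-\<gamma>))"
          by (rule ennreal_mult) auto
        show ?thesis unfolding I2 I3 t_def h by (simp only: mult.assoc)
      qed
      show ?thesis using e0 unfolding e1 e2 e3 .
    qed
    define X where "X = t 0 + ennreal (4 * K * r') * J"
    have ind: "t n \<le> ennreal (lam^n) * X" for n
    proof (induction n)
      case 0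
      then show ?case unfolding X_def by simp
    next
      case (Suc n)
      have b1: "ennreal (K * r' * \<beta>^n) * J \<le> ennreal (lam^n) * (ennreal (1/4) * X)"
      proof -
        have "ennreal (K * r' * \<beta>^n) * J = ennreal (\<beta>^n) * (ennreal (K * r') * J)"
          using K0 r'0 \<beta>0 by (simp add: ennreal_mult mult_ac)
        also have "\<dots> \<le> ennreal (lam^n) * (ennreal (K * r') * J)"
          using l0 \<beta>0 by (intro mult_right_mono ennreal_leI power_mono) auto
        also have "ennreal (K * r') * J \<le> ennreal (1/4) * X"
        proof -
          have "ennreal (K * r') * J = ennreal (1/4) * (ennreal (4 * K * r') * J)"
            using K0 r'0 by (simp add: ennreal_mult[symmetric] mult.assoc[symmetric])
          also have "\<dots> \<le> ennreal (1/4) * X" unfolding X_def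
            by (intro mult_left_mono) auto
          finally show ?thesis .
        qed
        finally show ?thesis by (simp add: mult_left_mono)
      qed
      have "t (Suc n) \<le> ennreal (K * r' * \<beta>^n) * J + ennreal (1/2) * t n" by (rule rec)
      also have "\<dots> \<le> ennreal (lam^n) * (ennreal (1/4) * X) + ennreal (1/2) * (ennreal (lam^n) * X)"
        using b1 Suc.IH by (intro add_mono mult_left_mono) auto
      also have "\<dots> = ennreal (lam^n * (3/4)) * X"
      proof -
        have p0: "0 \<le> lam^n" using l0 by simp
        have h1: "ennreal (lam^n) * ennreal (1/4) = ennreal (lam^n * (1/4))"
          using p0 by (rule ennreal_mult[symmetric]) simp
        have h2: "ennreal (1/2) * ennreal (lam^n) = ennreal (1/2 * lam^n)"
          using p0 by (intro ennreal_mult[symmetric]) simp_all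
        have h3: "ennreal (lam^n * (1/4)) + ennreal (1/2 * lam^n) = ennreal (lam^n * (1/4) + 1/2 * lam^n)"
          using p0 by (intro ennreal_plus[symmetric]) simp_all
        have h4: "lam^n * (1/4) + 1/2 * lam^n = lam^n * (3/4)" by simp
        have "ennreal (lam^n) * (ennreal (1/4) * X) + ennreal (1/2) * (ennreal (lam^n) * X)
            = (ennreal (lam^n) * ennreal (1/4) + ennreal (1/2) * ennreal (lam^n)) * X"
          by (simp only: distrib_right mult.assoc)
        also have "\<dots> = ennreal (lam^n * (3/4)) * X" unfolding h1 h2 h3 h4 ..
        finally show ?thesis .
      qed
      also have "\<dots> \<le> ennreal (lam^(Suc n)) * X"
        using l0 by (intro mult_right_mono ennreal_leI) auto
      finally show ?case .
    qed
    have sum_t: "(\<Sum>n. t n) \<le> ennreal L * X"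
    proof -
      have "(\<Sum>n. t n) \<le> (\<Sum>n. ennreal (lam^n) * X)"
        using ind by (intro suminf_le) auto
      also have "\<dots> = (\<Sum>n. ennreal (lam^n)) * X"
        by (simp add: mult.commute)
      also have "(\<Sum>n. ennreal (lam^n)) = ennreal L"
        unfolding L_def using l0
        by (subst suminf_ennreal2) (auto simp: suminf_geometric summable_geometric)
      finally show ?thesis .
    qed
    have t0: "t 0 \<le> ennreal (r powr (-\<gamma>)) * m"
      unfolding t_def S_def m_def u_def
      by (auto intro!: mult_left_mono nn_integral_mono simp: indicator_def)
    have pw: "ennreal (norm (x - z) powr (-\<gamma>)) * f x \<le> ennreal (r powr (-\<gamma>)) * f x + (\<Sum>n. ennreal (u n powr (-\<gamma>)) * (f x * indicator (A n) x))" for x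
    proof (cases "x = z")
      case True
      then show ?thesis by simp
    next
      case False
      define d where "d = norm (x - z)"
      have d0: "0 < d" unfolding d_def using False by simp
      show ?thesis
      proof (cases "r \<le> d")
        case True
        have "d powr (-\<gamma>) \<le> r powr (-\<gamma>)" using True r g by (intro powr_mono2') auto
        then have "ennreal (norm (x - z) powr (-\<gamma>)) * f x \<le> ennreal (r powr (-\<gamma>)) * f x"
          unfolding d_def by (intro mult_right_mono ennreal_leI) auto
        then show ?thesis by (meson add_increasing2 order_trans zero_le)
      next
        case False
        obtain N where N: "r / d < \<rho> ^ N" using real_arch_pow[OF \<rho>1] by blast
        define n where "n = (LEAST n. u n \<le> d)"
        have "u N \<le> d" unfolding u_def using N d0 \<rho>0 by (simp add: field_simps)
        then have un: "u n \<le> d" unfolding n_def by (rule LeastI)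
        have n0: "n \<noteq> 0"
        proof
          assume "n = 0"
          then have "u n = r" unfolding u_def by simp
          then show False using un False by simp
        qed
        have "n - 1 < n" using n0 by simp
        then have "\<not> u (n - 1) \<le> d" unfolding n_def by (rule not_less_Least)
        then have "d < u n * \<rho>" using n0 uSuc[of "n - 1"] \<rho>0 by simp
        with un have xA: "x \<in> A n" unfolding A_def d_def by simp
        have "d powr (-\<gamma>) \<le> u n powr (-\<gamma>)" using un u0[of n] g by (intro powr_mono2') auto
        then have "ennreal (norm (x - z) powr (-\<gamma>)) * f x \<le> ennreal (u n powr (-\<gamma>)) * (f x * indicator (A n) x)"
          unfolding d_def using xA by (auto intro!: mult_right_mono ennreal_leI)
        also have "\<dots> \<le> (\<Sum>n. ennreal (u n powr (-\<gamma>)) * (f x * indicator (A n) x))"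
          using sum_le_suminf[of "\<lambda>n. ennreal (u n powr (-\<gamma>)) * (f x * indicator (A n) x)" "{n}"]
          by auto
        finally show ?thesis by (meson add_increasing order_trans zero_le)
      qed
    qed
    have "(\<integral>\<^sup>+x. ennreal (norm (x - z) powr (-\<gamma>)) * f x \<partial>lborel)
        \<le> (\<integral>\<^sup>+x. ennreal (r powr (-\<gamma>)) * f x + (\<Sum>n. ennreal (u n powr (-\<gamma>)) * (f x * indicator (A n) x)) \<partial>lborel)"
      by (rule nn_integral_mono) (rule pw)
    also have "\<dots> = ennreal (r powr (-\<gamma>)) * m + (\<Sum>n. t n)"
      unfolding m_def t_def S_def
      by (subst nn_integral_add) (auto simp: nn_integral_suminf nn_integral_cmult)
    also have "\<dots> \<le> ennreal (r powr (-\<gamma>)) * m + ennreal L * (ennreal (r powr (-\<gamma>)) * m + ennreal (4 * K * r') * J)"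
      using sum_t t0 unfolding X_def
      by (meson add_left_mono add_right_mono mult_left_mono order_trans zero_le)
    also have "\<dots> = ennreal (C1 * r powr (-\<gamma>)) * m + ennreal (C2 * r powr (a - \<gamma>)) * J"
      unfolding C1_def C2_def r'_def using L0 K0
      by (simp add: distrib_left distrib_right ennreal_mult ennreal_plus mult_ac add_ac)
    finally show "(\<integral>\<^sup>+x. ennreal (norm (x - z) powr (-\<gamma>)) * f x \<partial>lborel)
       \<le> ennreal (C1 * r powr (-\<gamma>)) * (\<integral>\<^sup>+x. f x \<partial>lborel)
         + ennreal (C2 * r powr (a - \<gamma>)) * (\<integral>\<^sup>+x. \<integral>\<^sup>+y. Phi (f x) (f y) * Ker a x y \<partial>lborel \<partial>lborel)"
      unfolding m_def J_def .
  qed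
qed

theorem lemma3p14:
  fixes a \<gamma> p :: real
  assumes "0 < a" "a < 2" "0 < \<gamma>" "\<gamma> < a"
    and "2 / (2 - \<gamma>) < p" "p < 2 / (2 - a)"
  shows "\<exists>C > 0. \<forall>F. Psym F \<longrightarrow>
    (\<integral>\<^sup>+ z. (if fst z = snd z then \<infinity> else ennreal (norm (fst z - snd z) powr (- \<gamma>))) \<partial>F)
    \<le> (if Ia2 a F = \<infinity> then \<infinity>
        else ennreal (C * (1 + enn2real (Ia2 a F) powr (1 - (2 / a) * (1 / p - (2 - a) / 2)))))"
proof -
  note a = assms(1,2) and g = assms(3,4)
  obtain C1 C2 where C: "0 \<le> C1" "0 \<le> C2" and bound: "\<forall>f z r. f \<in> borel_measurable lborel \<longrightarrow> 0 < r \<longrightarrow>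
     (\<integral>\<^sup>+x. ennreal (norm (x - z) powr (-\<gamma>)) * f x \<partial>lborel)
       \<le> ennreal (C1 * r powr (-\<gamma>)) * (\<integral>\<^sup>+x. f x \<partial>lborel)
         + ennreal (C2 * r powr (a - \<gamma>)) * (\<integral>\<^sup>+x. \<integral>\<^sup>+y. Phi (f x) (f y) * Ker a x y \<partial>lborel \<partial>lborel)"
    using core[OF a g] by blast
  define \<theta> where "\<theta> = 1 - (2 / a) * (1 / p - (2 - a) / 2)"
  have q0: "0 < 2 / (2 - \<gamma>)" using a g by simp
  have p0: "0 < p" using q0 assms(5) by linarith
  have "2 < p * (2 - \<gamma>)" using assms(5) a g by (simp add: field_simps)
  then have p2: "2 / p < 2 - \<gamma>" using p0 by (simp add: field_simps)
  have \<theta>eq: "\<theta> = (2 - 2 / p) / a" unfolding \<theta>_def using a p0 by (simp add: field_simps)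
  have \<theta>ge: "\<gamma> / a \<le> \<theta>" unfolding \<theta>eq using p2 a by (intro divide_right_mono) auto
  define C where "C = 1 + C1 + 4 * C2"
  have C0: "0 < C" unfolding C_def using C by simp
  show ?thesis
  proof (intro exI[of _ C] conjI allI impI C0)
    fix F assume F: "Psym F"
    show "(\<integral>\<^sup>+ z. (if fst z = snd z then \<infinity> else ennreal (norm (fst z - snd z) powr (- \<gamma>))) \<partial>F)
      \<le> (if Ia2 a F = \<infinity> then \<infinity>
        else ennreal (C * (1 + enn2real (Ia2 a F) powr (1 - (2 / a) * (1 / p - (2 - a) / 2)))))"
    proof (cases "Ia2 a F = \<infinity>")
      case True
      then show ?thesis by simp
    next
      case False
      have ac: "absolutely_continuous lborel F"
        using False unfolding Ia2_def by (auto split: if_splits)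
      define G where "G = RN_deriv lborel F"
      have sF: "sets F = sets lborel" using F unfolding Psym_def by simp
      have pF: "prob_space F" using F unfolding Psym_def by simp
      have dens: "density lborel G = F" unfolding G_def
        by (rule sigma_finite_measure.density_RN_deriv[OF sigma_finite_lborel ac sF])
      have IaG: "Ia2 a F = Ia2_density a G" unfolding Ia2_def G_def using ac by simp
      define I where "I = enn2real (Ia2 a F)"
      have I0: "0 \<le> I" unfolding I_def by simp
      have IaI: "Ia2 a F = ennreal I" unfolding I_def using False by (simp add: ennreal_enn2real less_top)
      have Gm[measurable]: "G \<in> borel_measurable lborel" unfolding G_def by simp
      have Gm2[measurable]: "G \<in> borel_measurable (lborel \<Otimes>\<^sub>M lborel)" using Gm by (simp add: lborel_prod)
      define h where "h z = (if fst z = snd z then \<infinity> else ennreal (norm (fst z - snd z) powr (- \<gamma>)))" for z :: "(real \<times> real) \<times> (real \<times> real)"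
      have hm2[measurable]: "h \<in> borel_measurable (lborel \<Otimes>\<^sub>M lborel)" unfolding h_def by measurable
      have hm[measurable]: "h \<in> borel_measurable lborel" using hm2 by (simp add: lborel_prod)
      define m where "m x2 = (\<integral>\<^sup>+x. G (x, x2) \<partial>lborel)" for x2
      define J where "J x2 = (\<integral>\<^sup>+x. \<integral>\<^sup>+y. Phi (G (x, x2)) (G (y, x2)) * Ker a x y \<partial>lborel \<partial>lborel)" for x2
      have mm[measurable]: "m \<in> borel_measurable lborel" unfolding m_def by measurable
      have Jm[measurable]: "J \<in> borel_measurable lborel" unfolding J_def Ker_def by measurable
      have intm: "(\<integral>\<^sup>+x2. m x2 \<partial>lborel) = 1"
      proof -
        have "(\<integral>\<^sup>+x2. m x2 \<partial>lborel) = (\<integral>\<^sup>+z. G z \<partial>(lborel \<Otimes>\<^sub>M lborel))"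
          unfolding m_def by (rule lborel_pair.nn_integral_snd) simp
        also have "\<dots> = (\<integral>\<^sup>+z. G z * indicator UNIV z \<partial>lborel)" by (simp add: lborel_prod)
        also have "\<dots> = emeasure (density lborel G) UNIV" by (simp add: emeasure_density)
        also have "\<dots> = 1" unfolding dens
          using prob_space.emeasure_space_1[OF pF] sets_eq_imp_space_eq[OF sF] by simp
        finally show ?thesis .
      qed
      have intJ: "(\<integral>\<^sup>+x2. J x2 \<partial>lborel) \<le> 4 * ennreal I"
      proof -
        define T1 where "T1 = (\<integral>\<^sup>+x2. J x2 \<partial>lborel)"
        define T2 where "T2 = (\<integral>\<^sup>+ x1. \<integral>\<^sup>+ x. \<integral>\<^sup>+ y.
           Phi (G (x1, x)) (G (x1, y)) * ennreal (1 / norm (x - y) powr (2 + a)) \<partial>lborel \<partial>lborel \<partial>lborel)"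
        have "Ia2_density a G = ennreal (1/4) * (T1 + T2)"
          unfolding Ia2_density_def T1_def T2_def J_def Ker_def ..
        then have "4 * ennreal I = 4 * ennreal (1/4) * (T1 + T2)" using IaI IaG by (simp add: mult.assoc)
        also have "4 * ennreal (1/4) = 1"
          by (simp add: ennreal_numeral[symmetric] ennreal_mult[symmetric] del: ennreal_numeral)
        finally show ?thesis unfolding T1_def by simp
      qed
      have main: "(\<integral>\<^sup>+ z. h z \<partial>F) \<le> ennreal (C1 * r powr (-\<gamma>)) + ennreal (C2 * r powr (a - \<gamma>)) * (4 * ennreal I)"
        if r: "0 < r" for r
      proof -
        have "(\<integral>\<^sup>+ z. h z \<partial>F) = (\<integral>\<^sup>+ z. G z * h z \<partial>lborel)"
          unfolding dens[symmetric] by (rule nn_integral_density) simp_all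
        also have "\<dots> = (\<integral>\<^sup>+ z. G z * h z \<partial>(lborel \<Otimes>\<^sub>M lborel))" by (simp add: lborel_prod)
        also have "\<dots> = (\<integral>\<^sup>+x2. \<integral>\<^sup>+x1. G (x1, x2) * h (x1, x2) \<partial>lborel \<partial>lborel)"
          by (rule lborel_pair.nn_integral_snd[symmetric]) simp
        also have "\<dots> \<le> (\<integral>\<^sup>+x2. ennreal (C1 * r powr (-\<gamma>)) * m x2 + ennreal (C2 * r powr (a - \<gamma>)) * J x2 \<partial>lborel)"
        proof (rule nn_integral_mono)
          fix x2
          have fm: "(\<lambda>x. G (x, x2)) \<in> borel_measurable lborel" by measurable
          have "(\<integral>\<^sup>+x1. G (x1, x2) * h (x1, x2) \<partial>lborel) = (\<integral>\<^sup>+x1. ennreal (norm (x1 - x2) powr (-\<gamma>)) * G (x1, x2) \<partial>lborel)"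
            by (intro nn_integral_cong_AE eventually_mono[OF AE_lborel_singleton[of x2]]) (auto simp: h_def mult.commute)
          also have "\<dots> \<le> ennreal (C1 * r powr (-\<gamma>)) * m x2 + ennreal (C2 * r powr (a - \<gamma>)) * J x2"
            using bound fm r unfolding m_def J_def by blast
          finally show "(\<integral>\<^sup>+x1. G (x1, x2) * h (x1, x2) \<partial>lborel) \<le> ennreal (C1 * r powr (-\<gamma>)) * m x2 + ennreal (C2 * r powr (a - \<gamma>)) * J x2" .
        qed
        also have "\<dots> = ennreal (C1 * r powr (-\<gamma>)) * (\<integral>\<^sup>+x2. m x2 \<partial>lborel) + ennreal (C2 * r powr (a - \<gamma>)) * (\<integral>\<^sup>+x2. J x2 \<partial>lborel)"
          by (subst nn_integral_add) (auto simp: nn_integral_cmult)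
        also have "\<dots> \<le> ennreal (C1 * r powr (-\<gamma>)) + ennreal (C2 * r powr (a - \<gamma>)) * (4 * ennreal I)"
          unfolding intm using intJ by (simp add: mult_left_mono)
        finally show ?thesis .
      qed
      have real_bd: "\<exists>r>0. C1 * r powr (-\<gamma>) + C2 * r powr (a - \<gamma>) * (4 * I) \<le> C * (1 + I powr \<theta>)"
      proof (cases "I \<le> 1")
        case True
        have "C1 * 1 powr (-\<gamma>) + C2 * 1 powr (a - \<gamma>) * (4 * I) \<le> C1 + 4 * C2"
          using True C I0 mult_left_le[of I C2] by simp
        also have "\<dots> \<le> C * 1" unfolding C_def by simp
        also have "\<dots> \<le> C * (1 + I powr \<theta>)" using C0 by (intro mult_left_mono) auto
        finally show ?thesis by (intro exI[of _ 1]) auto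
      next
        case False
        define r where "r = I powr (-1/a)"
        have r0: "0 < r" unfolding r_def using False by simp
        have e1: "r powr (-\<gamma>) = I powr (\<gamma> / a)" unfolding r_def using False a
          by (simp add: powr_powr)
        have e2: "r powr (a - \<gamma>) * I = I powr (\<gamma> / a)"
        proof -
          have "r powr (a - \<gamma>) * I = I powr ((-1/a) * (a - \<gamma>)) * I powr 1" unfolding r_def using False
            by (simp add: powr_powr)
          also have "\<dots> = I powr ((-1/a) * (a - \<gamma>) + 1)" by (rule powr_add[symmetric])
          also have "(-1/a) * (a - \<gamma>) + 1 = \<gamma> / a" using a by (simp add: field_simps)
          finally show ?thesis .
        qed
        have "C1 * r powr (-\<gamma>) + C2 * r powr (a - \<gamma>) * (4 * I) = (C1 + 4 * C2) * I powr (\<gamma> / a)"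
          using e1 e2 by (simp add: algebra_simps)
        also have "\<dots> \<le> (C1 + 4 * C2) * I powr \<theta>"
          using C False \<theta>ge by (intro mult_left_mono powr_mono) auto
        also have "\<dots> \<le> C * (1 + I powr \<theta>)" unfolding C_def using C
          by (simp add: algebra_simps)
        finally show ?thesis using r0 by blast
      qed
      then obtain r where r: "0 < r" "C1 * r powr (-\<gamma>) + C2 * r powr (a - \<gamma>) * (4 * I) \<le> C * (1 + I powr \<theta>)"
        by blast
      have "(\<integral>\<^sup>+ z. h z \<partial>F) \<le> ennreal (C1 * r powr (-\<gamma>)) + ennreal (C2 * r powr (a - \<gamma>)) * (4 * ennreal I)"
        using main[OF r(1)] .
      also have "\<dots> = ennreal (C1 * r powr (-\<gamma>) + C2 * r powr (a - \<gamma>) * (4 * I))"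
        using C I0 by (simp add: ennreal_plus ennreal_mult)
      also have "\<dots> \<le> ennreal (C * (1 + I powr \<theta>))" using r(2) by (rule ennreal_leI)
      finally show ?thesis using False unfolding h_def \<theta>_def I_def by simp
    qed
  qed
qed

end
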